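(* (a) For every $\lambda\in\mathbb C_+$, $b_\lambda$ is locally integrable near the identity $e$ of $G$. (b) If $\Im\lambda>\rho$, then $b_\lambda\in L^1(G//K)$. (c) For every $\lambda\in\mathbb C_+$, $b_\lambda$ is square integrable on the complement of any neighbourhood of $e$. (d) For every $\lambda\in\mathbb C_+$ there exists $p<2$ (depending on $\lambda$) such that $b_\lambda$ is in $L^p$ on the complement of any neighbourhood of $e$.
   Context: Let $G$ be a connected noncompact semisimple Lie group with finite centre and real rank one, $K$ a maximal compact subgroup, $\mathfrak a$ the one-dimensional maximal abelian subspace of $\mathfrak p$ in a Cartan decomposition $\mathfrak g=\mathfrak k+\mathfrak p$. Restricted roots $\pm\alpha$ and possibly $\pm2\alpha$; $m_1=\dim\mathfrak g_\alpha$, $m_2=\dim\mathfrak g_{2\alpha}$ (possibly $0$), $\rho=\frac12(m_1+2m_2)$; $H_0\in\mathfrak a$ with $\alpha(H_0)=1$, $a_t=\exp(tH_0)$. Each $x\in G$ is $x=k_1a_tk_2$, $k_i\in K$, with unique $t\ge0$; Haar measure is $\int_Gf(x)\,dx=\int_K\int_0^\infty\int_Kf(k_1a_tk_2)\Delta(t)\,dk_1\,dt\,dk_2$ with $\Delta(t)=(2\sinh t)^{m_1+m_2}(2\cosh t)^{m_2}$. $L^1(G//K)$ denotes the $K$-biinvariant integrable functions. $\mathbb C_+=\{\Im\lambda>0\}$. For $t>0$, $\Phi_\lambda(a_t)=(2\cosh t)^{i\lambda-\rho}\,{}_2F_1\big(\frac{\rho-i\lambda}{2},\frac{m_1+2}{4}-\frac{i\lambda}{2};1-i\lambda;\cosh^{-2}t\big)$,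 $c(\lambda)=\dfrac{2^{\rho-i\lambda}\Gamma(\frac{m_1+m_2+1}{2})\Gamma(i\lambda)}{\Gamma(\frac{\rho+i\lambda}{2})\Gamma(\frac{m_1+2}{4}+\frac{i\lambda}{2})}$, and for $\lambda\in\mathbb C_+$, $b_\lambda$ is the $K$-biinvariant function on $G\setminus K$ with $b_\lambda(a_t)=\frac{i}{2\lambda c(-\lambda)}\Phi_\lambda(a_t)$, $t>0$. *)

theory Defs
  imports "HOL-Analysis.Analysis"
begin

text \<open>Restricted root multiplicities (m1, m2) of a connected noncompact real rank one
semisimple Lie group with finite centre (classification: SO(n,1), SU(n,1), Sp(n,1), F4(-20)).\<close>
definition rank_one_mult :: "nat \<Rightarrow> nat \<Rightarrow> bool" where
  "rank_one_mult m1 m2 \<longleftrightarrow>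
     (m2 = 0 \<and> m1 \<ge> 1) \<or>
     (m2 = 1 \<and> even m1 \<and> m1 \<ge> 2) \<or>
     (m2 = 3 \<and> 4 dvd m1 \<and> m1 \<ge> 4) \<or>
     (m1 = 8 \<and> m2 = 7)"

definition rho :: "nat \<Rightarrow> nat \<Rightarrow> real" where
  "rho m1 m2 = (real m1 + 2 * real m2) / 2"

text \<open>Density of Haar measure in polar coordinates.\<close>
definition Delta :: "nat \<Rightarrow> nat \<Rightarrow> real \<Rightarrow> real" where
  "Delta m1 m2 t = (2 * sinh t) ^ (m1 + m2) * (2 * cosh t) ^ m2"

definition hyp2F1 :: "complex \<Rightarrow> complex \<Rightarrow> complex \<Rightarrow> complex \<Rightarrow> complex" where
  "hyp2F1 a b c z =
     (\<Sum>n. pochhammer a n * pochhammer b n / (pochhammer c n * fact n) * z ^ n)"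

definition Phi :: "nat \<Rightarrow> nat \<Rightarrow> complex \<Rightarrow> real \<Rightarrow> complex" where
  "Phi m1 m2 l t =
     (complex_of_real (2 * cosh t)) powr (\<i> * l - complex_of_real (rho m1 m2)) *
     hyp2F1 ((complex_of_real (rho m1 m2) - \<i> * l) / 2)
            (complex_of_real ((real m1 + 2) / 4) - \<i> * l / 2)
            (1 - \<i> * l)
            (complex_of_real (1 / (cosh t)\<^sup>2))"

definition cfun :: "nat \<Rightarrow> nat \<Rightarrow> complex \<Rightarrow> complex" where
  "cfun m1 m2 l =
     (2 :: complex) powr (complex_of_real (rho m1 m2) - \<i> * l) *
     Gamma (complex_of_real ((real m1 + real m2 + 1) / 2)) * Gamma (\<i> * l) /
     (Gamma ((complex_of_real (rho m1 m2) + \<i> * l) / 2) *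
      Gamma (complex_of_real ((real m1 + 2) / 4) + \<i> * l / 2))"

text \<open>Radial part of b_lambda: b_lambda(a_t), t > 0.\<close>
definition b_rad :: "nat \<Rightarrow> nat \<Rightarrow> complex \<Rightarrow> real \<Rightarrow> complex" where
  "b_rad m1 m2 l t = \<i> / (2 * l * cfun m1 m2 (- l)) * Phi m1 m2 l t"

end

theory Submission imports Defs begin


lemma poly_ineq:
  fixes aa bb gg ss rr :: real
  assumes h: "aa + bb = ss + gg - 1/2" and rr: "rr \<ge> 0"
  shows "\<exists>N. \<forall>x\<ge>N. ((aa+x)^2+rr) * ((bb+x)^2+rr) \<le> (ss+x)^2 * ((gg+x)^2+4 * rr)"
proof -
  define q2 where "q2 = (ss+gg)^2 + 2 * ss * gg + 4 * rr - (aa+bb)^2 - 2 * aa * bb - 2 * rr"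
  define q1 where "q1 = 2 * ss * gg * (ss+gg) + 8 * rr * ss - 2 * aa * bb * (aa+bb) - 2 * rr * (aa+bb)"
  define q0 where "q0 = ss^2 * gg^2 + 4 * rr * ss^2 - aa^2 * bb^2 - rr * (aa^2+bb^2) - rr^2"
  have id: "(ss+x)^2 * ((gg+x)^2+4 * rr) - ((aa+x)^2+rr) * ((bb+x)^2+rr)
        = (2 * (ss+gg) - 2 * (aa+bb)) * x^3 + q2 * x^2 + q1 * x + q0" for x
    unfolding q2_def q1_def q0_def by (simp add: algebra_simps power2_eq_square power3_eq_cube)
  have c: "2 * (ss+gg) - 2 * (aa+bb) = 1" using h by simp
  show ?thesis
  proof (intro exI allI impI)
    fix x :: real assume x: "1 + \<bar>q2\<bar> + \<bar>q1\<bar> + \<bar>q0\<bar> \<le> x"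
    hence x1: "x \<ge> 1" by linarith
    have "x^2 \<ge> x" using x1 by (simp add: power2_eq_square)
    have "x^2 \<ge> 1" using x1 by (simp add: power2_eq_square) (metis less_1_mult less_eq_real_def mult.right_neutral) 
    have "q2 * x^2 \<ge> -\<bar>q2\<bar> * x^2" using mult_right_mono[of "-\<bar>q2\<bar>" q2 "x^2"] by simp
    moreover have "q1 * x \<ge> -\<bar>q1\<bar> * x^2"
    proof -
      have "q1 * x \<ge> -\<bar>q1\<bar> * x" using x1 mult_right_mono[of "-\<bar>q1\<bar>" q1 x] by simp
      also have "-\<bar>q1\<bar> * x \<ge> -\<bar>q1\<bar> * x^2" using \<open>x^2 \<ge> x\<close> by (simp add: mult_left_mono)
      finally show ?thesis by simp
    qed
    moreover have "q0 \<ge> -\<bar>q0\<bar> * x^2"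
    proof -
      have "\<bar>q0\<bar> * 1 \<le> \<bar>q0\<bar> * x^2" using \<open>x^2 \<ge> 1\<close> by (intro mult_left_mono) auto
      thus ?thesis by linarith
    qed
    moreover have "x^3 \<ge> (\<bar>q2\<bar> + \<bar>q1\<bar> + \<bar>q0\<bar>) * x^2"
    proof -
      have "x^3 = x  *  x^2" by (simp add: power3_eq_cube power2_eq_square)
      also have "\<dots> \<ge> (\<bar>q2\<bar> + \<bar>q1\<bar> + \<bar>q0\<bar>) * x^2" using x by (intro mult_right_mono) auto
      finally show ?thesis .
    qed
    ultimately have "x^3 + q2 * x^2 + q1 * x + q0 \<ge> 0" by (simp add: distrib_right)
    thus "((aa+x)^2+rr) * ((bb+x)^2+rr) \<le> (ss+x)^2 * ((gg+x)^2+4 * rr)" using id[of x] c by simp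
  qed
qed


lemma coef_bound:
  fixes A B Cc :: complex and s :: real
  assumes iB: "Im B = Im A" and iC: "Im Cc = 2 * Im A"
    and re: "Re A + Re B = s + Re Cc - 1/2" and rc: "Re Cc > 0" and s: "s > 0"
  shows "\<exists>C\<ge>0. \<forall>n. cmod (pochhammer A n * pochhammer B n / (pochhammer Cc n * fact n))
            \<le> C * (pochhammer s n / fact n)"
proof -
  obtain N where N: "\<And>x. x \<ge> N \<Longrightarrow> ((Re A + x)^2 + (Im A)^2) * ((Re B + x)^2 + (Im A)^2)
      \<le> (s + x)^2 * ((Re Cc + x)^2 + 4 * (Im A)^2)"
    using poly_ineq[OF re, of "(Im A)^2"] by auto
  define N' where "N' = nat \<lceil>N\<rceil>"
  have ratio: "cmod (A + of_nat n) * cmod (B + of_nat n) \<le> (s + real n) * cmod (Cc + of_nat n)"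
    if n: "n \<ge> N'" for n
  proof -
    have "real n \<ge> N" using n unfolding N'_def by linarith
    from N[OF this] have "(cmod (A + of_nat n) * cmod (B + of_nat n))^2 \<le> ((s + real n) * cmod (Cc + of_nat n))^2"
      unfolding power_mult_distrib cmod_power2 using iB iC by (simp add: power_mult_distrib)
    thus ?thesis by (rule power2_le_imp_le) (use s in simp)
  qed
  define c where "c n = pochhammer A n * pochhammer B n / (pochhammer Cc n * fact n)" for n
  define d where "d n = pochhammer s n / fact n" for n
  have dpos: "d n > 0" for n unfolding d_def using s by (simp add: pochhammer_pos)
  have Cnz: "Cc + of_nat k \<noteq> 0" for k
  proof
    assume "Cc + of_nat k = 0"
    hence "Re (Cc + of_nat k) = 0" by simp
    thus False using rc by simp
  qed
  have pCnz: "pochhammer Cc n \<noteq> 0" for n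
    using rc by (auto simp: pochhammer_eq_0_iff)
  have cSuc: "c (Suc n) = c n * ((A + of_nat n) * (B + of_nat n) / ((Cc + of_nat n) * of_nat (Suc n)))" for n
    unfolding c_def using pCnz[of n] Cnz[of n] by (simp add: pochhammer_Suc field_simps)
  have dSuc: "d (Suc n) = d n * ((s + real n) / real (Suc n))" for n
    unfolding d_def by (simp add: pochhammer_Suc field_simps)
  define C where "C = Max ((\<lambda>k. cmod (c k) / d k) ` {..N'})"
  have Cge: "cmod (c k) / d k \<le> C" if "k \<le> N'" for k
    unfolding C_def using that by (intro Max_ge) auto
  have "cmod (c n) \<le> C * d n" for n
  proof (induction n)
    case 0
    show ?case using Cge[of 0] dpos[of 0] by (simp add: field_simps)
  next
    case (Suc n)
    show ?case
    proof (cases "Suc n \<le> N'")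
      case True
      show ?thesis using Cge[OF True] dpos[of "Suc n"] by (simp add: field_simps)
    next
      case False
      hence nN: "n \<ge> N'" by simp
      have "cmod (c (Suc n)) = cmod (c n) * (cmod (A + of_nat n) * cmod (B + of_nat n) / (cmod (Cc + of_nat n) * real (Suc n)))"
        unfolding cSuc by (simp add: norm_mult norm_divide del: of_nat_Suc)
      also have "\<dots> \<le> cmod (c n) * ((s + real n) / real (Suc n))"
      proof (intro mult_left_mono)
        have "cmod (A + of_nat n) * cmod (B + of_nat n) / (cmod (Cc + of_nat n) * real (Suc n))
            \<le> (s + real n) * cmod (Cc + of_nat n) / (cmod (Cc + of_nat n) * real (Suc n))"
          using ratio[OF nN] by (intro divide_right_mono) auto
        also have "\<dots> = (s + real n) / real (Suc n)" using Cnz[of n] by simp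
        finally show "cmod (A + of_nat n) * cmod (B + of_nat n) / (cmod (Cc + of_nat n) * real (Suc n))
            \<le> (s + real n) / real (Suc n)" .
      qed simp
      also have "\<dots> \<le> C * d n * ((s + real n) / real (Suc n))"
        using Suc.IH s by (intro mult_right_mono) auto
      also have "\<dots> = C * d (Suc n)" unfolding dSuc by simp
      finally show ?thesis .
    qed
  qed
  moreover have "C \<ge> 0"
  proof -
    have "0 \<le> cmod (c 0) / d 0" using dpos[of 0] by simp
    also have "\<dots> \<le> C" using Cge[of 0] by simp
    finally show ?thesis .
  qed
  ultimately show ?thesis unfolding c_def d_def by blast
qed


lemma binom_sums:
  fixes s x :: real
  assumes "0 \<le> x" "x < 1"
  shows "(\<lambda>n. pochhammer s n / fact n * x ^ n) sums (1 - x) powr (-s)"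
proof -
  have "\<bar>-x\<bar> < 1" using assms by simp
  from gen_binomial_real[OF this, of "-s"]
  have "(\<lambda>n. ((-s) gchoose n) * (-x)^n) sums (1 - x) powr (-s)" by simp
  also have "(\<lambda>n. ((-s) gchoose n) * (-x)^n) = (\<lambda>n. pochhammer s n / fact n * x ^ n)"
  proof
    fix n
    have g: "((-s) gchoose n) = (-1)^n * (pochhammer s n / fact n)"
      unfolding gbinomial_pochhammer by simp
    have m: "(-x)^n = (-1)^n * x^n" by (rule power_minus)
    have o: "(-1::real)^n * (-1)^n = 1" by (induct n) auto
    have "((-s) gchoose n) * (-x)^n = ((-1)^n * (-1)^n) * (pochhammer s n / fact n * x ^ n)"
      unfolding g m by (simp only: mult_ac)
    thus "((-s) gchoose n) * (-x)^n = pochhammer s n / fact n * x ^ n" unfolding o by simp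
  qed
  finally show ?thesis .
qed

lemma hyp_facts:
  fixes A B Cc w :: complex and s C :: real
  assumes cb: "\<And>n. cmod (pochhammer A n * pochhammer B n / (pochhammer Cc n * fact n))
            \<le> C * (pochhammer s n / fact n)" and w: "cmod w < 1"
  shows "summable (\<lambda>n. norm (pochhammer A n * pochhammer B n / (pochhammer Cc n * fact n) * w ^ n))"
    and "cmod (hyp2F1 A B Cc w) \<le> C * (1 - cmod w) powr (-s)"
proof -
  define c where "c n = pochhammer A n * pochhammer B n / (pochhammer Cc n * fact n)" for n
  have b0: "(\<lambda>n. pochhammer s n / fact n * cmod w ^ n) sums (1 - cmod w) powr (-s)"
    by (rule binom_sums) (use w in auto)
  have bs: "(\<lambda>n. C * (pochhammer s n / fact n * cmod w ^ n)) sums (C * (1 - cmod w) powr (-s))"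
    by (rule sums_mult[OF b0])
  have le: "norm (c n * w ^ n) \<le> C * (pochhammer s n / fact n * cmod w ^ n)" for n
  proof -
    have "norm (c n * w ^ n) = cmod (c n) * cmod w ^ n" by (simp add: norm_mult norm_power)
    also have "\<dots> \<le> C * (pochhammer s n / fact n) * cmod w ^ n"
      using cb[of n] unfolding c_def by (rule mult_right_mono) simp
    finally show ?thesis by (simp only: mult.assoc)
  qed
  have sm: "summable (\<lambda>n. norm (c n * w ^ n))"
  proof (rule summable_comparison_test)
    show "\<exists>N. \<forall>n\<ge>N. norm (norm (c n * w ^ n)) \<le> C * (pochhammer s n / fact n * cmod w ^ n)"
      using le by simp
    show "summable (\<lambda>n. C * (pochhammer s n / fact n * cmod w ^ n))" using bs by (rule sums_summable)
  qed
  thus "summable (\<lambda>n. norm (pochhammer A n * pochhammer B n / (pochhammer Cc n * fact n) * w ^ n))"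
    unfolding c_def .
  have "cmod (hyp2F1 A B Cc w) = norm (\<Sum>n. c n * w ^ n)" unfolding hyp2F1_def c_def ..
  also have "\<dots> \<le> (\<Sum>n. norm (c n * w ^ n))" by (rule summable_norm[OF sm])
  also have "\<dots> \<le> (\<Sum>n. C * (pochhammer s n / fact n * cmod w ^ n))"
    by (rule suminf_le[OF le sm sums_summable[OF bs]])
  also have "\<dots> = C * (1 - cmod w) powr (-s)" using bs by (rule sums_unique[symmetric])
  finally show "cmod (hyp2F1 A B Cc w) \<le> C * (1 - cmod w) powr (-s)" .
qed
lemma hyp_isCont:
  fixes A B Cc w :: complex and s C :: real
  assumes cb: "\<And>n. cmod (pochhammer A n * pochhammer B n / (pochhammer Cc n * fact n))
            \<le> C * (pochhammer s n / fact n)" and w: "cmod w < 1"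
  shows "isCont (hyp2F1 A B Cc) w"
proof -
  define K where "K = complex_of_real ((1 + cmod w) / 2)"
  have nK: "cmod K = (1 + cmod w) / 2" unfolding K_def norm_of_real by simp
  have K: "cmod K < 1" "cmod w < cmod K" unfolding nK using w by auto
  have "summable (\<lambda>n. pochhammer A n * pochhammer B n / (pochhammer Cc n * fact n) * K ^ n)"
    by (rule summable_norm_cancel, rule hyp_facts(1)[OF cb K(1)])
  from isCont_powser[OF this K(2)]
  show ?thesis unfolding hyp2F1_def[abs_def] by simp
qed

lemma rank_m1: "rank_one_mult m1 m2 \<Longrightarrow> m1 \<ge> 1"
  unfolding rank_one_mult_def by auto

lemma coef_spec:
  assumes r: "rank_one_mult m1 m2" and l: "Im l > 0"
  shows "\<exists>C\<ge>0. \<forall>n. cmod (pochhammer ((complex_of_real (rho m1 m2) - \<i> * l) / 2) n *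
      pochhammer (complex_of_real ((real m1 + 2) / 4) - \<i> * l / 2) n /
      (pochhammer (1 - \<i> * l) n * fact n)) \<le> C * (pochhammer ((real m1 + real m2) / 2) n / fact n)"
proof (rule coef_bound)
  show "(real m1 + real m2) / 2 > 0" using rank_m1[OF r] by simp
qed (use l in \<open>auto simp: rho_def field_simps\<close>)

lemma cosh_gt1: "t > 0 \<Longrightarrow> cosh (t::real) > 1"
  using cosh_real_nonneg_less_iff[of 0 t] by simp

lemma b_facts:
  assumes r: "rank_one_mult m1 m2" and l: "Im l > 0"
  shows "\<exists>K\<ge>0. \<forall>t>0. cmod (b_rad m1 m2 l t) \<le>
           K * (2 * cosh t) powr (-(rho m1 m2 + Im l)) * (1 - 1 / (cosh t)^2) powr (-((real m1 + real m2) / 2))"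
    and "continuous_on {0<..} (b_rad m1 m2 l)"
proof -
  define A where "A = (complex_of_real (rho m1 m2) - \<i> * l) / 2"
  define B where "B = complex_of_real ((real m1 + 2) / 4) - \<i> * l / 2"
  define Cc where "Cc = 1 - \<i> * l"
  define s where "s = (real m1 + real m2) / 2"
  obtain C where C: "C \<ge> 0" "\<And>n. cmod (pochhammer A n * pochhammer B n / (pochhammer Cc n * fact n))
     \<le> C * (pochhammer s n / fact n)"
    using coef_spec[OF r l] unfolding A_def B_def Cc_def s_def by blast
  define c0 where "c0 = \<i> / (2 * l * cfun m1 m2 (- l))"
  define W where "W = \<i> * l - complex_of_real (rho m1 m2)"
  have beq: "b_rad m1 m2 l t = c0 * (complex_of_real (2 * cosh t) powr W *
        hyp2F1 A B Cc (complex_of_real (1 / (cosh t)\<^sup>2)))" for t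
    unfolding b_rad_def Phi_def c0_def W_def A_def B_def Cc_def by simp
  have zeq: "cmod (complex_of_real (1 / (cosh t)\<^sup>2)) = 1 / (cosh t)\<^sup>2" for t
    unfolding norm_of_real by simp
  have zlt: "cmod (complex_of_real (1 / (cosh t)\<^sup>2)) < 1" if "t > 0" for t
  proof -
    have "cosh t > 1" using cosh_gt1[OF that] .
    hence "(cosh t)^2 > 1" by (simp add: one_less_power)
    thus ?thesis unfolding zeq by simp
  qed
  show "\<exists>K\<ge>0. \<forall>t>0. cmod (b_rad m1 m2 l t) \<le>
           K * (2 * cosh t) powr (-(rho m1 m2 + Im l)) * (1 - 1 / (cosh t)^2) powr (-((real m1 + real m2) / 2))"
  proof (intro exI[of _ "cmod c0 * C"] conjI allI impI)
    show "cmod c0 * C \<ge> 0" using C by simp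
    fix t :: real assume t: "t > 0"
    have n1: "cmod (complex_of_real (2 * cosh t) powr W) = (2 * cosh t) powr (-(rho m1 m2 + Im l))"
      by (subst norm_powr_real_powr) (auto simp: W_def algebra_simps)
    have n2: "cmod (hyp2F1 A B Cc (complex_of_real (1 / (cosh t)\<^sup>2))) \<le> C * (1 - 1 / (cosh t)^2) powr (-s)"
      using hyp_facts(2)[OF C(2) zlt[OF t]] unfolding zeq .
    have "cmod (b_rad m1 m2 l t) = cmod c0 * ((2 * cosh t) powr (-(rho m1 m2 + Im l)) *
        cmod (hyp2F1 A B Cc (complex_of_real (1 / (cosh t)\<^sup>2))))"
      unfolding beq norm_mult n1 ..
    also have "\<dots> \<le> cmod c0 * ((2 * cosh t) powr (-(rho m1 m2 + Im l)) * (C * (1 - 1 / (cosh t)^2) powr (-s)))"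
      using n2 by (intro mult_left_mono) auto
    finally show "cmod (b_rad m1 m2 l t) \<le> cmod c0 * C * (2 * cosh t) powr (-(rho m1 m2 + Im l)) *
        (1 - 1 / (cosh t)^2) powr (-((real m1 + real m2) / 2))"
      unfolding s_def by (simp add: mult_ac)
  qed
  show "continuous_on {0<..} (b_rad m1 m2 l)"
  proof (rule continuous_at_imp_continuous_on, intro ballI)
    fix t :: real assume "t \<in> {0<..}"
    hence t: "t > 0" by simp
    have h: "isCont (hyp2F1 A B Cc) (complex_of_real (1 / (cosh t)\<^sup>2))"
      by (rule hyp_isCont[OF C(2) zlt[OF t]])
    have h2: "isCont (\<lambda>t. hyp2F1 A B Cc (complex_of_real (1 / (cosh t)\<^sup>2))) t"
      by (rule isCont_o2[where f="\<lambda>t. complex_of_real (1 / (cosh t)\<^sup>2)" and g="hyp2F1 A B Cc", OF _ h])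
        (intro continuous_intros, simp)
    have p: "isCont (\<lambda>t. complex_of_real (2 * cosh t) powr W) t"
      by (intro continuous_intros) (auto simp: complex_nonpos_Reals_iff)
    show "isCont (b_rad m1 m2 l) t"
      unfolding beq[abs_def] by (intro continuous_intros p h2)
  qed
qed

lemma exp_int:
  fixes d M :: real
  assumes d: "d > 0"
  shows "set_integrable lborel {0..} (\<lambda>t. M * exp (- d * t))"
proof -
  have "(\<lambda>t. exp (- d * t)) absolutely_integrable_on {0..}"
    by (rule nonnegative_absolutely_integrable_1[OF integrable_on_exp_minus_to_infinity[OF d]]) auto
  hence "integrable lebesgue (\<lambda>t. indicator {0..} t *\<^sub>R exp (- d * t))"
    unfolding set_integrable_def .
  hence "integrable lborel (\<lambda>t::real. indicator {0..} t *\<^sub>R exp (- d * t))"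
    by (subst (asm) integrable_completion) auto
  hence "set_integrable lborel {0..} (\<lambda>t. exp (- d * t))" unfolding set_integrable_def .
  thus ?thesis by (rule set_integrable_mult_right)
qed

lemma dom_int:
  fixes h :: "real \<Rightarrow> real" and d M :: real
  assumes S: "S \<subseteq> {0<..}" "S \<in> sets borel" and c: "continuous_on S h" and d: "d > 0"
    and b: "\<And>t. t \<in> S \<Longrightarrow> \<bar>h t\<bar> \<le> M * exp (- d * t)"
  shows "set_integrable lborel S h"
proof -
  have "set_integrable lborel S (\<lambda>t. M * exp (- d * t))"
    by (rule set_integrable_subset[OF exp_int[OF d]]) (use S in auto)
  thus ?thesis
    unfolding set_integrable_def
  proof (rule Bochner_Integration.integrable_bound)
    show "(\<lambda>x. indicator S x *\<^sub>R h x) \<in> borel_measurable lborel"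
      using borel_measurable_continuous_on_indicator[OF S(2) c] by simp
    show "AE x in lborel. norm (indicator S x *\<^sub>R h x) \<le> norm (indicator S x *\<^sub>R (M * exp (- d * x)))"
    proof (intro AE_I2)
      fix x show "norm (indicator S x *\<^sub>R h x) \<le> norm (indicator S x *\<^sub>R (M * exp (- d * x)))"
        using b[of x] by (cases "x \<in> S") auto
    qed
  qed
qed

lemma cosh_powr_exp:
  fixes e t :: real
  assumes "e \<le> 0"
  shows "(2 * cosh t) powr e \<le> exp (e * t)"
proof -
  have "exp t \<le> 2 * cosh t" unfolding cosh_def by (simp add: field_simps)
  hence "(2 * cosh t) powr e \<le> (exp t) powr e" using assms by (intro powr_mono2') auto
  also have "\<dots> = exp (e * t)" by (simp add: powr_def)
  finally show ?thesis .
qed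


lemma Delta_nonneg: "t \<ge> 0 \<Longrightarrow> Delta m1 m2 t \<ge> 0"
  unfolding Delta_def by simp

lemma two_rho: "real m1 + 2 * real m2 = 2 * rho m1 m2"
  unfolding rho_def by simp

lemma F_global:
  assumes r: "rank_one_mult m1 m2" and l: "Im l > 0"
  shows "\<exists>K\<ge>0. \<forall>t>0. Delta m1 m2 t * cmod (b_rad m1 m2 l t) \<le> K * (2 * cosh t) powr (rho m1 m2 - Im l)"
proof -
  obtain K where K: "K \<ge> 0" "\<And>t. t > 0 \<Longrightarrow> cmod (b_rad m1 m2 l t) \<le>
           K * (2 * cosh t) powr (-(rho m1 m2 + Im l)) * (1 - 1 / (cosh t)^2) powr (-((real m1 + real m2) / 2))"
    using b_facts(1)[OF r l] by blast
  show ?thesis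
  proof (intro exI[of _ K] conjI allI impI)
    show "K \<ge> 0" by fact
    fix t :: real assume t: "t > 0"
    define c where "c = cosh t"
    define sh where "sh = sinh t"
    define N where "N = m1 + m2"
    have c: "c > 0" and sh: "sh > 0" using t unfolding c_def sh_def by auto
    have e0: "1 - 1 / (cosh t)^2 = (sh / c) ^ 2"
    proof -
      have "c^2 = sh^2 + 1" unfolding c_def sh_def by (rule cosh_square_eq)
      moreover have "c^2 > 0" using c by simp
      ultimately show ?thesis unfolding c_def[symmetric] by (simp add: field_simps power_divide)
    qed
    have e1: "1 - 1 / (cosh t)^2 = (sh / c) powr 2"
      unfolding e0 using c sh by simp
    have e2: "(1 - 1 / (cosh t)^2) powr (-((real m1 + real m2) / 2)) = (c / sh) ^ N"
    proof -
      have "(1 - 1 / (cosh t)^2) powr (-((real m1 + real m2) / 2)) = (sh / c) powr (- real N)"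
      proof -
        have "2 * (-((real m1 + real m2) / 2)) = - real N" unfolding N_def by (simp add: add_divide_distrib)
        thus ?thesis unfolding e1 powr_powr by simp
      qed
      also have "\<dots> = inverse ((sh / c) ^ N)" using c sh by (simp add: powr_minus powr_realpow)
      also have "\<dots> = (c / sh) ^ N" by (simp add: power_inverse[symmetric])
      finally show ?thesis .
    qed
    have D: "Delta m1 m2 t = (2 * sh) ^ N * (2 * c) ^ m2" unfolding Delta_def c_def sh_def N_def ..
    have "Delta m1 m2 t * cmod (b_rad m1 m2 l t) \<le>
          Delta m1 m2 t * (K * (2 * c) powr (-(rho m1 m2 + Im l)) * (c / sh) ^ N)"
      using K(2)[OF t] Delta_nonneg[of t m1 m2] t unfolding e2 c_def by (intro mult_left_mono) auto
    also have "\<dots> = K * ((2 * sh) ^ N * (c / sh) ^ N) * (2 * c) ^ m2 * (2 * c) powr (-(rho m1 m2 + Im l))"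
      unfolding D by (simp add: mult_ac)
    also have "(2 * sh) ^ N * (c / sh) ^ N = (2 * c) ^ N"
    proof -
      have "(2 * sh) ^ N * (c / sh) ^ N = (2 * sh * (c / sh)) ^ N" by (rule power_mult_distrib[symmetric])
      also have "2 * sh * (c / sh) = 2 * c" using sh by simp
      finally show ?thesis .
    qed
    also have "K * (2 * c) ^ N * (2 * c) ^ m2 * (2 * c) powr (-(rho m1 m2 + Im l))
        = K * ((2 * c) ^ (N + m2) * (2 * c) powr (-(rho m1 m2 + Im l)))"
      by (simp only: power_add mult.assoc)
    also have "(2 * c) ^ (N + m2) = (2 * c) powr (real (N + m2))"
      using c by (simp only: powr_realpow mult_pos_pos zero_less_numeral)
    also have "(2 * c) powr (real (N + m2)) * (2 * c) powr (-(rho m1 m2 + Im l)) = (2 * c) powr (rho m1 m2 - Im l)"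
      unfolding powr_add[symmetric] using two_rho[of m1 m2] unfolding N_def by (simp add: algebra_simps)
    finally show "Delta m1 m2 t * cmod (b_rad m1 m2 l t) \<le> K * (2 * cosh t) powr (rho m1 m2 - Im l)"
      unfolding c_def .
  qed
qed


lemma F_eps:
  assumes r: "rank_one_mult m1 m2" and l: "Im l > 0" and e: "e > 0" and p: "p \<ge> 0"
  shows "\<exists>K\<ge>0. \<forall>t\<ge>e. Delta m1 m2 t * cmod (b_rad m1 m2 l t) powr p
            \<le> K * (2 * cosh t) powr (2 * rho m1 m2 - p * (rho m1 m2 + Im l))"
proof -
  obtain K where K: "K \<ge> 0" "\<And>t. t > 0 \<Longrightarrow> cmod (b_rad m1 m2 l t) \<le>
           K * (2 * cosh t) powr (-(rho m1 m2 + Im l)) * (1 - 1 / (cosh t)^2) powr (-((real m1 + real m2) / 2))"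
    using b_facts(1)[OF r l] by blast
  define T where "T = (1 - 1 / (cosh e)^2) powr (-((real m1 + real m2) / 2))"
  have T: "T \<ge> 0" unfolding T_def by simp
  show ?thesis
  proof (intro exI[of _ "(K * T) powr p"] conjI allI impI)
    show "(K * T) powr p \<ge> 0" by simp
    fix t :: real assume te: "t \<ge> e"
    hence t: "t > 0" using e by simp
    define c where "c = cosh t"
    define sh where "sh = sinh t"
    define N where "N = m1 + m2"
    have c: "c > 0" and sh: "sh > 0" using t unfolding c_def sh_def by auto
    have ce: "cosh e \<le> cosh t" using te e cosh_real_nonneg_le_iff[of e t] by simp
    have ce1: "cosh e > 1" using cosh_gt1[OF e] .
    have pos: "0 < 1 - 1 / (cosh e)^2"
    proof -
      have "(cosh e)^2 > 1" using ce1 by (simp add: one_less_power)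
      thus ?thesis by simp
    qed
    have mono: "1 - 1 / (cosh e)^2 \<le> 1 - 1 / (cosh t)^2"
    proof -
      have "(cosh e)^2 \<le> (cosh t)^2" using ce ce1 by (intro power_mono) auto
      hence "1 / (cosh t)^2 \<le> 1 / (cosh e)^2" using ce1 by (intro divide_left_mono) auto
      thus ?thesis by simp
    qed
    have Tb: "(1 - 1 / (cosh t)^2) powr (-((real m1 + real m2) / 2)) \<le> T"
      unfolding T_def by (rule powr_mono2'[OF _ pos mono]) simp
    have bb: "cmod (b_rad m1 m2 l t) \<le> (K * T) * (2 * c) powr (-(rho m1 m2 + Im l))"
    proof -
      have "cmod (b_rad m1 m2 l t) \<le> K * (2 * c) powr (-(rho m1 m2 + Im l)) * T"
        using K(2)[OF t] Tb K(1) unfolding c_def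
        by (smt (verit) mult_left_mono powr_ge_zero zero_le_mult_iff)
      thus ?thesis by (simp add: mult_ac)
    qed
    have bp: "cmod (b_rad m1 m2 l t) powr p \<le> (K * T) powr p * (2 * c) powr (- p * (rho m1 m2 + Im l))"
    proof -
      have "cmod (b_rad m1 m2 l t) powr p \<le> ((K * T) * (2 * c) powr (-(rho m1 m2 + Im l))) powr p"
        by (rule powr_mono2[OF p _ bb]) simp
      also have "\<dots> = (K * T) powr p * (2 * c) powr (- p * (rho m1 m2 + Im l))"
        by (simp add: powr_mult powr_powr algebra_simps)
      finally show ?thesis .
    qed
    have Db: "Delta m1 m2 t \<le> (2 * c) powr (2 * rho m1 m2)"
    proof -
      have "Delta m1 m2 t = (2 * sh) ^ N * (2 * c) ^ m2" unfolding Delta_def c_def sh_def N_def ..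
      also have "\<dots> \<le> (2 * c) ^ N * (2 * c) ^ m2"
        using sh sinh_le_cosh_real[of t] unfolding c_def sh_def
        by (intro mult_right_mono power_mono) auto
      also have "\<dots> = (2 * c) ^ (N + m2)" by (simp add: power_add)
      also have "\<dots> = (2 * c) powr (real (N + m2))" using c by (simp only: powr_realpow mult_pos_pos zero_less_numeral)
      also have "real (N + m2) = 2 * rho m1 m2" using two_rho[of m1 m2] unfolding N_def by simp
      finally show ?thesis .
    qed
    have "Delta m1 m2 t * cmod (b_rad m1 m2 l t) powr p
        \<le> (2 * c) powr (2 * rho m1 m2) * ((K * T) powr p * (2 * c) powr (- p * (rho m1 m2 + Im l)))"
      using Db bp Delta_nonneg[of t m1 m2] t by (intro mult_mono) auto
    also have "\<dots> = (K * T) powr p * (2 * c) powr (2 * rho m1 m2 - p * (rho m1 m2 + Im l))"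
      by (simp add: powr_add[symmetric] mult_ac)
    finally show "Delta m1 m2 t * cmod (b_rad m1 m2 l t) powr p
        \<le> (K * T) powr p * (2 * cosh t) powr (2 * rho m1 m2 - p * (rho m1 m2 + Im l))"
      unfolding c_def .
  qed
qed

lemma F_cont:
  assumes r: "rank_one_mult m1 m2" and l: "Im l > 0" and S: "S \<subseteq> {0<..}" and p: "p > 0"
  shows "continuous_on S (\<lambda>t. Delta m1 m2 t * cmod (b_rad m1 m2 l t) powr p)"
    and "continuous_on S (\<lambda>t. Delta m1 m2 t * cmod (b_rad m1 m2 l t))"
proof -
  have cb: "continuous_on S (b_rad m1 m2 l)"
    by (rule continuous_on_subset[OF b_facts(2)[OF r l] S])
  have cD: "continuous_on S (Delta m1 m2)" unfolding Delta_def[abs_def] by (intro continuous_intros)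
  have cn: "continuous_on S (\<lambda>t. cmod (b_rad m1 m2 l t))" by (intro continuous_intros cb)
  show "continuous_on S (\<lambda>t. Delta m1 m2 t * cmod (b_rad m1 m2 l t))"
    by (intro continuous_intros cD cn)
  have "continuous_on S (\<lambda>t. cmod (b_rad m1 m2 l t) powr p)"
    by (rule continuous_on_powr'[OF cn continuous_on_const]) (use p in auto)
  thus "continuous_on S (\<lambda>t. Delta m1 m2 t * cmod (b_rad m1 m2 l t) powr p)"
    by (rule continuous_on_mult[OF cD])
qed


lemma rho_nonneg: "rho m1 m2 \<ge> 0" unfolding rho_def by simp

lemma eps_int:
  assumes r: "rank_one_mult m1 m2" and l: "Im l > 0" and e: "e > 0" and p: "p > 0"
    and neg: "2 * rho m1 m2 - p * (rho m1 m2 + Im l) < 0"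
  shows "set_integrable lborel {e..} (\<lambda>t. Delta m1 m2 t * cmod (b_rad m1 m2 l t) powr p)"
proof -
  define x where "x = 2 * rho m1 m2 - p * (rho m1 m2 + Im l)"
  obtain K where K: "K \<ge> 0" "\<And>t. t \<ge> e \<Longrightarrow> Delta m1 m2 t * cmod (b_rad m1 m2 l t) powr p \<le> K * (2 * cosh t) powr x"
    using F_eps[OF r l e less_imp_le[OF p]] unfolding x_def by blast
  show ?thesis
  proof (rule dom_int[where d = "-x" and M = K])
    show "{e..} \<subseteq> {0<..}" using e by auto
    show "continuous_on {e..} (\<lambda>t. Delta m1 m2 t * cmod (b_rad m1 m2 l t) powr p)"
      by (rule F_cont(1)[OF r l _ p]) (use e in auto)
    show "- x > 0" using neg unfolding x_def by simp
    fix t :: real assume "t \<in> {e..}"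
    hence te: "t \<ge> e" by simp
    hence t: "t \<ge> 0" using e by simp
    have "\<bar>Delta m1 m2 t * cmod (b_rad m1 m2 l t) powr p\<bar> = Delta m1 m2 t * cmod (b_rad m1 m2 l t) powr p"
      using Delta_nonneg[OF t] by simp
    also have "\<dots> \<le> K * (2 * cosh t) powr x" by (rule K(2)[OF te])
    also have "\<dots> \<le> K * exp (x * t)" using neg K(1) unfolding x_def
      by (intro mult_left_mono cosh_powr_exp) auto
    finally show "\<bar>Delta m1 m2 t * cmod (b_rad m1 m2 l t) powr p\<bar> \<le> K * exp (- (- x) * t)" by simp
  qed simp
qed

theorem lemma3p2:
  fixes m1 m2 :: nat
  assumes "rank_one_mult m1 m2"
  shows
    "(\<forall>l. Im l > 0 \<longrightarrow>
        (\<exists>\<epsilon>>0. set_integrable lborel {0<..<\<epsilon>}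
                   (\<lambda>t. Delta m1 m2 t * cmod (b_rad m1 m2 l t))))
   \<and> (\<forall>l. Im l > rho m1 m2 \<longrightarrow>
        set_integrable lborel {0<..} (\<lambda>t. Delta m1 m2 t * cmod (b_rad m1 m2 l t)))
   \<and> (\<forall>l. Im l > 0 \<longrightarrow> (\<forall>\<epsilon>>0.
        set_integrable lborel {\<epsilon>..} (\<lambda>t. Delta m1 m2 t * (cmod (b_rad m1 m2 l t))\<^sup>2)))
   \<and> (\<forall>l. Im l > 0 \<longrightarrow> (\<exists>p::real. 1 \<le> p \<and> p < 2 \<and> (\<forall>\<epsilon>>0.
        set_integrable lborel {\<epsilon>..} (\<lambda>t. Delta m1 m2 t * cmod (b_rad m1 m2 l t) powr p))))"
proof (intro conjI allI impI)
  note r = assms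
  have rp: "rho m1 m2 > 0" using rank_m1[OF r] unfolding rho_def by simp
  fix l :: complex assume l: "Im l > 0"
  obtain K where K: "K \<ge> 0" "\<And>t. t > 0 \<Longrightarrow> Delta m1 m2 t * cmod (b_rad m1 m2 l t) \<le> K * (2 * cosh t) powr (rho m1 m2 - Im l)"
    using F_global[OF r l] by blast
  show "\<exists>\<epsilon>>0. set_integrable lborel {0<..<\<epsilon>} (\<lambda>t. Delta m1 m2 t * cmod (b_rad m1 m2 l t))"
  proof (intro exI conjI)
    show "(1::real) > 0" by simp
    show "set_integrable lborel {0<..<1} (\<lambda>t. Delta m1 m2 t * cmod (b_rad m1 m2 l t))"
    proof (rule dom_int[where d = 1 and M = "K * (exp 1 + 1) powr rho m1 m2 * exp 1"])
      show "continuous_on {0<..<1} (\<lambda>t. Delta m1 m2 t * cmod (b_rad m1 m2 l t))"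
        by (rule F_cont(2)[OF r l, where p = 1]) auto
      fix t :: real assume "t \<in> {0<..<1}"
      hence t: "t > 0" "t < 1" by auto
      have c1: "1 \<le> 2 * cosh t" using cosh_real_ge_1[of t] by simp
      have c2: "2 * cosh t \<le> exp 1 + 1"
      proof -
        have h1: "exp t \<le> exp 1" "exp (-t) \<le> 1" using t by auto
        have "2 * cosh t = exp t + exp (-t)" by (simp add: cosh_def)
        thus ?thesis using h1 by linarith
      qed
      have "\<bar>Delta m1 m2 t * cmod (b_rad m1 m2 l t)\<bar> = Delta m1 m2 t * cmod (b_rad m1 m2 l t)"
        using Delta_nonneg[of t m1 m2] t by simp
      also have "\<dots> \<le> K * (2 * cosh t) powr (rho m1 m2 - Im l)" by (rule K(2)[OF t(1)])
      also have "\<dots> \<le> K * (2 * cosh t) powr (rho m1 m2)"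
        using l c1 K(1) by (intro mult_left_mono powr_mono) auto
      also have "\<dots> \<le> K * (exp 1 + 1) powr (rho m1 m2)"
        using c1 c2 K(1) rho_nonneg[of m1 m2] by (intro mult_left_mono powr_mono2) auto
      also have "\<dots> \<le> K * (exp 1 + 1) powr (rho m1 m2) * (exp 1 * exp (-1 * t))"
      proof -
        have "exp 1 * exp (-1 * t) = exp (1 - t)" by (simp add: exp_add[symmetric])
        also have "\<dots> \<ge> 1" using t by simp
        finally have "1 \<le> exp 1 * exp (-1 * t)" .
        moreover have "K * (exp 1 + 1) powr (rho m1 m2) \<ge> 0" using K(1) by simp
        ultimately show ?thesis by (metis mult_left_mono mult.right_neutral)
      qed
      finally show "\<bar>Delta m1 m2 t * cmod (b_rad m1 m2 l t)\<bar> \<le> K * (exp 1 + 1) powr rho m1 m2 * exp 1 * exp (- 1 * t)"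
        by (simp add: mult_ac)
    qed auto
  qed
next
  note r = assms
  have rp: "rho m1 m2 > 0" using rank_m1[OF r] unfolding rho_def by simp
  fix l :: complex assume lr: "Im l > rho m1 m2"
  hence l: "Im l > 0" using rp by simp
  obtain K where K: "K \<ge> 0" "\<And>t. t > 0 \<Longrightarrow> Delta m1 m2 t * cmod (b_rad m1 m2 l t) \<le> K * (2 * cosh t) powr (rho m1 m2 - Im l)"
    using F_global[OF r l] by blast
  show "set_integrable lborel {0<..} (\<lambda>t. Delta m1 m2 t * cmod (b_rad m1 m2 l t))"
  proof (rule dom_int[where d = "Im l - rho m1 m2" and M = K])
    show "continuous_on {0<..} (\<lambda>t. Delta m1 m2 t * cmod (b_rad m1 m2 l t))"
      by (rule F_cont(2)[OF r l, where p = 1]) auto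
    fix t :: real assume "t \<in> {0<..}"
    hence t: "t > 0" by auto
    have "\<bar>Delta m1 m2 t * cmod (b_rad m1 m2 l t)\<bar> = Delta m1 m2 t * cmod (b_rad m1 m2 l t)"
      using Delta_nonneg[of t m1 m2] t by simp
    also have "\<dots> \<le> K * (2 * cosh t) powr (rho m1 m2 - Im l)" by (rule K(2)[OF t])
    also have "\<dots> \<le> K * exp ((rho m1 m2 - Im l) * t)"
      using lr K(1) by (intro mult_left_mono cosh_powr_exp) auto
    finally show "\<bar>Delta m1 m2 t * cmod (b_rad m1 m2 l t)\<bar> \<le> K * exp (- (Im l - rho m1 m2) * t)"
      by simp
  qed (use lr in auto)
next
  note r = assms
  fix l :: complex and e :: real assume l: "Im l > 0" and e: "e > 0"
  have "set_integrable lborel {e..} (\<lambda>t. Delta m1 m2 t * cmod (b_rad m1 m2 l t) powr 2)"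
    by (rule eps_int[OF r l e]) (use l in \<open>auto simp: algebra_simps\<close>)
  thus "set_integrable lborel {e..} (\<lambda>t. Delta m1 m2 t * (cmod (b_rad m1 m2 l t))\<^sup>2)" by simp
next
  note r = assms
  have rp: "rho m1 m2 > 0" using rank_m1[OF r] unfolding rho_def by simp
  fix l :: complex assume l: "Im l > 0"
  define p where "p = 1 + rho m1 m2 / (rho m1 m2 + Im l)"
  have pos: "rho m1 m2 + Im l > 0" using rp l by simp
  show "\<exists>p::real. 1 \<le> p \<and> p < 2 \<and> (\<forall>\<epsilon>>0.
        set_integrable lborel {\<epsilon>..} (\<lambda>t. Delta m1 m2 t * cmod (b_rad m1 m2 l t) powr p))"
  proof (intro exI[of _ p] conjI allI impI)
    show p1: "1 \<le> p" unfolding p_def using rp pos by simp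
    show "p < 2" unfolding p_def using rp l pos by (simp add: field_simps)
    fix e :: real assume e: "e > 0"
    have eq: "2 * rho m1 m2 - p * (rho m1 m2 + Im l) = - Im l"
      unfolding p_def using pos by (simp add: field_simps)
    show "set_integrable lborel {e..} (\<lambda>t. Delta m1 m2 t * cmod (b_rad m1 m2 l t) powr p)"
    proof (rule eps_int[OF r l e])
      show "p > 0" using p1 by simp
      show "2 * rho m1 m2 - p * (rho m1 m2 + Im l) < 0" unfolding eq using l by simp
    qed
  qed
qed

end
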